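(* Let $p$ be a prime. The matrix $(L(n,k,0,p))_{n,k\ge0}$ has the properties that for each $k\ge0$ there is $i\in\{0,\dots,p-1\}$ with $L(n,k,0,p)=e(n,k,i,p)$ for all $n\ge0$, and $L(n,n,0,p)=1$ for all $n\ge 0$; moreover it is the unique matrix $(a(n,k))_{n,k\ge0}$ with these two properties (each column equal to $(e(n,k,i,p))_{n\ge0}$ for some $i$, and all main-diagonal entries equal to $1$).
   Context: $e(n,k,j,p)$ is the number of $k$-element subsets of $\{1,\dots,n\}$ whose sum of elements is congruent to $j$ modulo $p$ (the empty set has sum $0$). $\begin{bmatrix} n\\ k\end{bmatrix}_q$ is the Gaussian binomial coefficient (a polynomial in $q$, zero for $k>n$). The $p$-Losanitsch numbers $L(n,k,j,p)$, $0\le j\le p-1$, are defined by $\sum_{j=0}^{p-1}L(n,k,j,p)q^j\equiv\begin{bmatrix} n\\ k\end{bmatrix}_q\pmod{q^p-1}$, i.e. $L(n,k,j,p)$ is the sum of the coefficients of $q^m$ in $\begin{bmatrix} n\\ k\end{bmatrix}_q$ over all $m\equiv j\pmod p$. *)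

theory Defs
  imports "HOL-Computational_Algebra.Polynomial"
begin

definition e_count :: "nat \<Rightarrow> nat \<Rightarrow> nat \<Rightarrow> nat \<Rightarrow> nat" where
  "e_count n k j p = card {S. S \<subseteq> {1..n} \<and> card S = k \<and> (\<Sum>S) mod p = j mod p}"

fun gauss_binom :: "nat \<Rightarrow> nat \<Rightarrow> int poly" where
  "gauss_binom n 0 = 1"
| "gauss_binom 0 (Suc k) = 0"
| "gauss_binom (Suc n) (Suc k) = gauss_binom n k + monom 1 (Suc k) * gauss_binom n (Suc k)"

definition losanitsch :: "nat \<Rightarrow> nat \<Rightarrow> nat \<Rightarrow> nat \<Rightarrow> int" where
  "losanitsch n k j p =
     (\<Sum>m \<in> {m. m \<le> degree (gauss_binom n k) \<and> m mod p = j mod p}. coeff (gauss_binom n k) m)"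

end

theory Submission
  imports Defs
begin


definition Sets :: "nat \<Rightarrow> nat \<Rightarrow> nat set set" where
  "Sets n k = {S. S \<subseteq> {1..n} \<and> card S = k}"

definition G :: "nat \<Rightarrow> nat \<Rightarrow> int poly" where
  "G n k = (\<Sum>S\<in>Sets n k. monom 1 (\<Sum>S))"

fun tri :: "nat \<Rightarrow> nat" where
  "tri 0 = 0" | "tri (Suc k) = tri k + Suc k"

lemma finite_Sets: "finite (Sets n k)"
  unfolding Sets_def by (rule finite_subset[of _ "Pow {1..n}"]) auto

lemma Sets_0: "Sets n 0 = {{}}"
proof -
  have "S = {}" if "S \<subseteq> {1..n}" "card S = 0" for S :: "nat set"
    using that finite_subset[OF that(1)] by simp
  thus ?thesis unfolding Sets_def by auto
qed

lemma Sets_0_Suc: "Sets 0 (Suc k) = {}"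
  unfolding Sets_def by auto

lemma Sets_split:
  "Sets (Suc n) (Suc k) = (\<lambda>T. insert 1 (Suc ` T)) ` Sets n k \<union> (\<lambda>T. Suc ` T) ` Sets n (Suc k)"
proof (rule set_eqI, rule iffI)
  fix S assume S: "S \<in> Sets (Suc n) (Suc k)"
  hence sub: "S \<subseteq> {1..Suc n}" and cS: "card S = Suc k" by (auto simp: Sets_def)
  have fin: "finite S" using sub finite_subset by blast
  define T where "T = (\<lambda>x. x - 1) ` (S - {1})"
  have ST: "S - {1} = Suc ` T" unfolding T_def using sub by (force simp: image_iff)
  have Tsub: "T \<subseteq> {1..n}" unfolding T_def using sub by force
  have cT: "card T = card (S - {1})" using ST card_image[of Suc T] by simp
  show "S \<in> (\<lambda>T. insert 1 (Suc ` T)) ` Sets n k \<union> (\<lambda>T. Suc ` T) ` Sets n (Suc k)"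
  proof (cases "1 \<in> S")
    case True
    hence "S = insert 1 (Suc ` T)" using ST by blast
    moreover have "card T = k" using cT True cS fin by simp
    ultimately show ?thesis using Tsub by (auto simp: Sets_def)
  next
    case False
    hence "S = Suc ` T" using ST by blast
    moreover have "card T = Suc k" using cT False cS by simp
    ultimately show ?thesis using Tsub by (auto simp: Sets_def)
  qed
next
  fix S assume "S \<in> (\<lambda>T. insert 1 (Suc ` T)) ` Sets n k \<union> (\<lambda>T. Suc ` T) ` Sets n (Suc k)"
  then show "S \<in> Sets (Suc n) (Suc k)"
  proof
    assume "S \<in> (\<lambda>T. insert 1 (Suc ` T)) ` Sets n k"
    then obtain T where T: "T \<subseteq> {1..n}" "card T = k" "S = insert 1 (Suc ` T)"
      by (auto simp: Sets_def)
    have "finite T" using T(1) finite_subset by blast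
    moreover have "1 \<notin> Suc ` T" using T(1) by auto
    ultimately have "card S = Suc k" using T card_image[of Suc T] by simp
    moreover have "S \<subseteq> {1..Suc n}" using T by auto
    ultimately show ?thesis by (simp add: Sets_def)
  next
    assume "S \<in> (\<lambda>T. Suc ` T) ` Sets n (Suc k)"
    then obtain T where T: "T \<subseteq> {1..n}" "card T = Suc k" "S = Suc ` T"
      by (auto simp: Sets_def)
    have "card S = Suc k" using T card_image[of Suc T] by simp
    moreover have "S \<subseteq> {1..Suc n}" using T by auto
    ultimately show ?thesis by (simp add: Sets_def)
  qed
qed

lemma sum_Suc_card: "(\<Sum>x\<in>T. Suc x) = \<Sum>T + card (T::nat set)"
  by (induction T rule: infinite_finite_induct) auto

lemma G_rec: "G (Suc n) (Suc k) = monom 1 (Suc k) * (G n k + G n (Suc k))"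
proof -
  let ?f = "\<lambda>T. insert 1 (Suc ` T)" and ?g = "\<lambda>T::nat set. Suc ` T"
  have injg: "inj_on ?g X" for X by (rule inj_onI) (simp add: inj_image_eq_iff[OF inj_Suc])
  have injf: "inj_on ?f (Sets n k)"
  proof (rule inj_onI)
    fix A B assume A: "A \<in> Sets n k" and B: "B \<in> Sets n k" and e: "?f A = ?f B"
    have a: "1 \<notin> Suc ` A" and b: "1 \<notin> Suc ` B" using A B by (auto simp: Sets_def)
    have "Suc ` A = ?f A - {1}" using a by auto
    also have "\<dots> = ?f B - {1}" using e by (rule arg_cong)
    also have "\<dots> = Suc ` B" using b by auto
    finally have "Suc ` A = Suc ` B" .
    thus "A = B" by (simp add: inj_image_eq_iff[OF inj_Suc])
  qed
  have disj: "?f ` Sets n k \<inter> ?g ` Sets n (Suc k) = {}"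
  proof -
    have "1 \<notin> Suc ` T" if "T \<in> Sets n (Suc k)" for T using that by (auto simp: Sets_def)
    thus ?thesis by auto
  qed
  have fin1: "finite (?f ` Sets n k)" "finite (?g ` Sets n (Suc k))" using finite_Sets by auto
  have sf: "\<Sum>(?f T) = Suc (\<Sum>T + card T)" if "T \<in> Sets m j" for T m j
  proof -
    have fT: "finite T" using that finite_subset by (auto simp: Sets_def)
    have n1: "1 \<notin> Suc ` T" using that by (auto simp: Sets_def)
    have "\<Sum>(?f T) = 1 + \<Sum>(Suc ` T)" using fT n1 by (subst sum.insert) auto
    also have "\<Sum>(Suc ` T) = (\<Sum>x\<in>T. Suc x)" by (simp add: sum.reindex)
    also have "\<dots> = \<Sum>T + card T" by (rule sum_Suc_card)
    finally show ?thesis by simp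
  qed
  have sg: "\<Sum>(?g T) = \<Sum>T + card T" for T
  proof -
    have "\<Sum>(Suc ` T) = (\<Sum>x\<in>T. Suc x)" by (simp add: sum.reindex)
    also have "\<dots> = \<Sum>T + card T" by (rule sum_Suc_card)
    finally show ?thesis .
  qed
  have "G (Suc n) (Suc k) = (\<Sum>S\<in>?f ` Sets n k. monom 1 (\<Sum>S)) + (\<Sum>S\<in>?g ` Sets n (Suc k). monom 1 (\<Sum>S))"
    unfolding G_def Sets_split by (rule sum.union_disjoint[OF fin1 disj])
  also have "(\<Sum>S\<in>?f ` Sets n k. monom 1 (\<Sum>S)) = (\<Sum>T\<in>Sets n k. monom 1 (\<Sum>(?f T)))"
    by (rule sum.reindex[OF injf, unfolded comp_def])
  also have "\<dots> = (\<Sum>T\<in>Sets n k. monom 1 (Suc k) * monom (1::int) (\<Sum>T))"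
  proof -
    have "monom 1 (\<Sum>(?f T)) = monom 1 (Suc k) * monom (1::int) (\<Sum>T)" if T: "T \<in> Sets n k" for T
    proof -
      have c: "card T = k" using T by (simp add: Sets_def)
      show ?thesis unfolding sf[OF T] mult_monom c by (simp add: add.commute)
    qed
    thus ?thesis by (intro sum.cong) auto
  qed
  also have "(\<Sum>S\<in>?g ` Sets n (Suc k). monom 1 (\<Sum>S)) = (\<Sum>T\<in>Sets n (Suc k). monom 1 (\<Sum>(?g T)))"
    by (rule sum.reindex[OF injg, unfolded comp_def])
  also have "\<dots> = (\<Sum>T\<in>Sets n (Suc k). monom 1 (Suc k) * monom (1::int) (\<Sum>T))"
  proof -
    have "monom 1 (\<Sum>(?g T)) = monom 1 (Suc k) * monom (1::int) (\<Sum>T)" if T: "T \<in> Sets n (Suc k)" for T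
    proof -
      have c: "card T = Suc k" using T by (simp add: Sets_def)
      show ?thesis unfolding sg mult_monom c by (simp add: add.commute)
    qed
    thus ?thesis by (intro sum.cong) auto
  qed
  finally show ?thesis by (simp add: G_def sum_distrib_left distrib_left)
qed

lemma G_gauss: "G n k = monom 1 (tri k) * gauss_binom n k"
proof (induction n arbitrary: k)
  case 0
  then show ?case by (cases k) (simp_all add: G_def Sets_0 Sets_0_Suc)
next
  case (Suc n)
  then show ?case
  proof (cases k)
    case 0 then show ?thesis by (simp add: G_def Sets_0)
  next
    case (Suc j)
    show ?thesis unfolding Suc G_rec Suc.IH
      by (simp add: algebra_simps mult_monom)
  qed
qed

lemma sum_le_Sets: "S \<in> Sets n k \<Longrightarrow> \<Sum>S \<le> \<Sum>{1..n}"
  unfolding Sets_def by (auto intro: sum_mono2)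

lemma e_count_G:
  assumes "\<Sum>{1..n} \<le> B"
  shows "int (e_count n k j p) = (\<Sum>s\<in>{s. s \<le> B \<and> s mod p = j mod p}. coeff (G n k) s)"
proof -
  let ?A = "{s. s \<le> B \<and> s mod p = j mod p}"
  have finA: "finite ?A" by simp
  have "(\<Sum>s\<in>?A. coeff (G n k) s) = (\<Sum>s\<in>?A. \<Sum>S\<in>Sets n k. if \<Sum>S = s then 1 else 0)"
    by (simp add: G_def coeff_sum coeff_monom eq_commute)
  also have "\<dots> = (\<Sum>S\<in>Sets n k. \<Sum>s\<in>?A. if \<Sum>S = s then 1 else 0)"
    by (rule sum.swap)
  also have "\<dots> = (\<Sum>S\<in>Sets n k. if \<Sum>S \<in> ?A then 1 else 0)"
    by (rule sum.cong[OF refl]) (simp add: finA)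
  also have "\<dots> = int (card {S\<in>Sets n k. \<Sum>S \<in> ?A})"
    using finite_Sets by (simp add: sum.If_cases Int_def)
  also have "{S\<in>Sets n k. \<Sum>S \<in> ?A} = {S. S \<subseteq> {1..n} \<and> card S = k \<and> (\<Sum>S) mod p = j mod p}"
  proof (rule set_eqI, rule iffI)
    fix S assume "S \<in> {S\<in>Sets n k. \<Sum>S \<in> ?A}"
    thus "S \<in> {S. S \<subseteq> {1..n} \<and> card S = k \<and> (\<Sum>S) mod p = j mod p}"
      by (simp add: Sets_def)
  next
    fix S assume S: "S \<in> {S. S \<subseteq> {1..n} \<and> card S = k \<and> (\<Sum>S) mod p = j mod p}"
    hence SS: "S \<in> Sets n k" by (simp add: Sets_def)
    have "\<Sum>S \<le> B" using sum_le_Sets[OF SS] assms by linarith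
    thus "S \<in> {S\<in>Sets n k. \<Sum>S \<in> ?A}" using S SS by simp
  qed
  finally show ?thesis by (simp add: e_count_def)
qed

lemma e_diag: "e_count k k j p = (if tri k mod p = j mod p then 1 else 0)"
proof -
  have t: "\<Sum>{1..k} = tri k" by (induction k) (simp_all add: add.commute)
  have "{S. S \<subseteq> {1..k} \<and> card S = k} = {{1..k}}"
  proof (rule set_eqI, rule iffI)
    fix S assume "S \<in> {S. S \<subseteq> {1..k} \<and> card S = k}"
    thus "S \<in> {{1..k}}" using card_subset_eq[of "{1..k}" S] by auto
  qed auto
  hence "{S. S \<subseteq> {1..k} \<and> card S = k \<and> (\<Sum>S) mod p = j mod p}
       = {S\<in>{{1..k}}. (\<Sum>S) mod p = j mod p}" by blast
  also have "\<dots> = (if tri k mod p = j mod p then {{1..k}} else {})" using t by auto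
  finally have eq: "{S. S \<subseteq> {1..k} \<and> card S = k \<and> (\<Sum>S) mod p = j mod p}
       = (if tri k mod p = j mod p then {{1..k}} else {})" .
  show ?thesis unfolding e_count_def eq by simp
qed

lemma main_L:
  shows "losanitsch n k 0 p = int (e_count n k (tri k mod p) p)"
proof -
  let ?g = "gauss_binom n k" and ?t = "tri k"
  define D where "D = degree ?g"
  define M where "M = D + \<Sum>{1..n}"
  let ?S0 = "{m. m \<le> M \<and> m mod p = 0}"
  let ?S1 = "{s. s \<le> ?t + M \<and> s mod p = (?t mod p) mod p}"
  have "losanitsch n k 0 p = (\<Sum>m\<in>{m. m \<le> D \<and> m mod p = 0}. coeff ?g m)"
    by (simp add: losanitsch_def D_def)
  also have "\<dots> = (\<Sum>m\<in>?S0. coeff ?g m)"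
    by (rule sum.mono_neutral_left) (auto simp: M_def D_def intro: le_degree)
  also have "\<dots> = (\<Sum>m\<in>?S0. coeff (G n k) (m + ?t))"
    by (simp add: G_gauss coeff_monom_mult)
  also have "\<dots> = (\<Sum>s\<in>(\<lambda>m. m + ?t) ` ?S0. coeff (G n k) s)"
    by (simp add: sum.reindex inj_on_def)
  also have "\<dots> = (\<Sum>s\<in>?S1. coeff (G n k) s)"
  proof (rule sum.mono_neutral_left)
    show "finite ?S1" by simp
    show "(\<lambda>m. m + ?t) ` ?S0 \<subseteq> ?S1" by (auto simp: mod_add_left_eq[symmetric])
    show "\<forall>s\<in>?S1 - (\<lambda>m. m + ?t) ` ?S0. coeff (G n k) s = 0"
    proof
      fix s assume s: "s \<in> ?S1 - (\<lambda>m. m + ?t) ` ?S0"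
      have "s < ?t"
      proof (rule ccontr)
        assume "\<not> s < ?t"
        hence le: "?t \<le> s" by simp
        have "p dvd s - ?t" using s le mod_eq_dvd_iff_nat[OF le] by simp
        hence m: "s - ?t \<in> ?S0" using s by auto
        have e: "s = (s - ?t) + ?t" using le by simp
        have "s \<in> (\<lambda>m. m + ?t) ` ?S0" using m e by (rule rev_image_eqI[where f="\<lambda>m. m + ?t"])
        moreover have "s \<notin> (\<lambda>m. m + ?t) ` ?S0" using s by (rule DiffE) assumption
        ultimately show False by contradiction
      qed
      thus "coeff (G n k) s = 0" by (simp add: G_gauss coeff_monom_mult)
    qed
  qed
  also have "\<dots> = int (e_count n k (tri k mod p) p)"
    by (rule e_count_G[symmetric]) (simp add: M_def)
  finally show ?thesis .
qed

theorem proposition5p2: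
  fixes p :: nat
  assumes "prime p"
  shows "(\<forall>k. \<exists>i<p. \<forall>n. losanitsch n k 0 p = int (e_count n k i p))
       \<and> (\<forall>n. losanitsch n n 0 p = 1)
       \<and> (\<forall>a :: nat \<Rightarrow> nat \<Rightarrow> int.
            ((\<forall>k. \<exists>i<p. \<forall>n. a n k = int (e_count n k i p)) \<and> (\<forall>n. a n n = 1))
            \<longrightarrow> (\<forall>n k. a n k = losanitsch n k 0 p))"
proof (intro conjI allI impI)
  have p0: "p > 0" using assms prime_gt_0_nat by blast
  show "\<exists>i<p. \<forall>n. losanitsch n k 0 p = int (e_count n k i p)" for k
    using p0 main_L by (intro exI[of _ "tri k mod p"]) auto
  show "losanitsch n n 0 p = 1" for n
    by (simp add: main_L e_diag)
  fix a :: "nat \<Rightarrow> nat \<Rightarrow> int" and n k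
  assume H: "(\<forall>k. \<exists>i<p. \<forall>n. a n k = int (e_count n k i p)) \<and> (\<forall>n. a n n = 1)"
  then obtain i where i: "i < p" "\<forall>n. a n k = int (e_count n k i p)" by blast
  have "a k k = 1" using H by blast
  hence "e_count k k i p = 1" using i by simp
  hence "tri k mod p = i mod p" by (simp add: e_diag split: if_splits)
  hence "i = tri k mod p" using i by simp
  thus "a n k = losanitsch n k 0 p" using i main_L by simp
qed

end
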